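(* Let $n\ge k\ge1$ and let $\mathbf{M}=(m_{i,j})$ be a $k\times n$ binary matrix satisfying the MDS Condition, all of whose rows have Hamming weight exactly $n-k+1$, and such that the zero sets $Z_i=\{j\in[n]: m_{i,j}=0\}$ satisfy $|Z_i\cap Z_{i'}|\le1$ for all $i\ne i'$. Then for every prime power $q\ge n+k-1$ there exists an $[n,k]_q$ MDS code having a generator matrix that fits $\mathbf{M}$.
   Context: $[n]=\{1,\ldots,n\}$. $\mathbf{M}$ satisfies the MDS Condition if $|\bigcup_{i\in I}{\sf supp}(\mathbf{M}_i)|\ge n-k+|I|$ for all nonempty $I\subseteq[k]$, where ${\sf supp}(\mathbf{M}_i)=\{j: m_{i,j}\ne0\}$. A matrix $\mathbf{G}=(g_{i,j})\in\mathbb{F}_q^{k\times n}$ fits $\mathbf{M}$ if $g_{i,j}=0$ whenever $m_{i,j}=0$. An $[n,k]_q$ MDS code is a $k$-dimensional linear code in $\mathbb{F}_q^n$ with minimum Hamming distance $n-k+1$. *)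

theory Defs
  imports Main
begin

text \<open>A k x n binary matrix is modelled as M :: nat => nat => bool, rows indexed by
  {..<k}, columns by {..<n}; M i j = True means m_{i,j} = 1 (nonzero).
  Vectors of F_q^n are functions nat => 'a, only coordinates < n matter.\<close>

definition supp :: "nat \<Rightarrow> (nat \<Rightarrow> nat \<Rightarrow> bool) \<Rightarrow> nat \<Rightarrow> nat set" where
  "supp n M i = {j. j < n \<and> M i j}"

definition zero_set :: "nat \<Rightarrow> (nat \<Rightarrow> nat \<Rightarrow> bool) \<Rightarrow> nat \<Rightarrow> nat set" where
  "zero_set n M i = {j. j < n \<and> \<not> M i j}"

definition MDS_condition :: "nat \<Rightarrow> nat \<Rightarrow> (nat \<Rightarrow> nat \<Rightarrow> bool) \<Rightarrow> bool" where
  "MDS_condition n k M \<longleftrightarrow>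
     (\<forall>I. I \<subseteq> {..<k} \<longrightarrow> I \<noteq> {} \<longrightarrow> card (\<Union>i\<in>I. supp n M i) \<ge> n - k + card I)"

definition fits :: "nat \<Rightarrow> nat \<Rightarrow> (nat \<Rightarrow> nat \<Rightarrow> 'a::zero) \<Rightarrow> (nat \<Rightarrow> nat \<Rightarrow> bool) \<Rightarrow> bool" where
  "fits n k G M \<longleftrightarrow> (\<forall>i<k. \<forall>j<n. \<not> M i j \<longrightarrow> G i j = 0)"

definition row_space :: "nat \<Rightarrow> nat \<Rightarrow> (nat \<Rightarrow> nat \<Rightarrow> 'a::field) \<Rightarrow> (nat \<Rightarrow> 'a) set" where
  "row_space n k G = {(\<lambda>j. if j < n then (\<Sum>i<k. c i * G i j) else 0) | c. True}"

definition rows_independent :: "nat \<Rightarrow> nat \<Rightarrow> (nat \<Rightarrow> nat \<Rightarrow> 'a::field) \<Rightarrow> bool" where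
  "rows_independent n k G \<longleftrightarrow>
     (\<forall>c. (\<forall>j<n. (\<Sum>i<k. c i * G i j) = 0) \<longrightarrow> (\<forall>i<k. c i = 0))"

definition is_generator_matrix :: "nat \<Rightarrow> nat \<Rightarrow> (nat \<Rightarrow> nat \<Rightarrow> 'a::field) \<Rightarrow> (nat \<Rightarrow> 'a) set \<Rightarrow> bool" where
  "is_generator_matrix n k G C \<longleftrightarrow> C = row_space n k G \<and> rows_independent n k G"

definition hamming_dist :: "nat \<Rightarrow> (nat \<Rightarrow> 'a) \<Rightarrow> (nat \<Rightarrow> 'a) \<Rightarrow> nat" where
  "hamming_dist n u v = card {j. j < n \<and> u j \<noteq> v j}"

definition min_distance :: "nat \<Rightarrow> (nat \<Rightarrow> 'a) set \<Rightarrow> nat" where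
  "min_distance n C = Min {hamming_dist n u v | u v. u \<in> C \<and> v \<in> C \<and> u \<noteq> v}"

definition is_linear_code :: "nat \<Rightarrow> nat \<Rightarrow> (nat \<Rightarrow> 'a::field) set \<Rightarrow> bool" where
  "is_linear_code n k C \<longleftrightarrow> (\<exists>G. is_generator_matrix n k G C)"

definition is_MDS_code :: "nat \<Rightarrow> nat \<Rightarrow> (nat \<Rightarrow> 'a::field) set \<Rightarrow> bool" where
  "is_MDS_code n k C \<longleftrightarrow> is_linear_code n k C \<and> min_distance n C = n - k + 1"

end

theory Submission
  imports Defs "HOL-Computational_Algebra.Polynomial" "Jordan_Normal_Form.Determinant"
begin

definition polyish :: "(nat \<Rightarrow> nat) \<Rightarrow> ((nat \<Rightarrow> 'a::comm_ring_1) \<Rightarrow> 'a) \<Rightarrow> bool" where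
  "polyish d f \<longleftrightarrow> (\<forall>j \<alpha>. \<exists>p. degree p \<le> d j \<and> (\<forall>t. f (\<alpha>(j:=t)) = poly p t))"

lemma polyish_const: "polyish d (\<lambda>_. c)"
  unfolding polyish_def by (intro allI exI[of _ "[:c:]"]) auto

lemma polyish_lin: "polyish (\<lambda>j. if j = j0 then 1 else 0) (\<lambda>\<alpha>. c - \<alpha> j0)"
  unfolding polyish_def
proof (intro allI)
  fix j \<alpha>
  show "\<exists>p. degree p \<le> (if j = j0 then 1 else 0) \<and> (\<forall>t. c - (\<alpha>(j := t)) j0 = poly p t)"
  proof (cases "j = j0")
    case True
    then show ?thesis by (intro exI[of _ "[:c, -1:]"]) auto
  next
    case False
    then show ?thesis by (intro exI[of _ "[:c - \<alpha> j0:]"]) auto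
  qed
qed

lemma polyish_mono: "polyish d f \<Longrightarrow> (\<And>j. d j \<le> d' j) \<Longrightarrow> polyish d' f"
  unfolding polyish_def by (meson order_trans)

lemma polyish_mult:
  assumes "polyish d1 f" "polyish d2 g"
  shows "polyish (\<lambda>j. d1 j + d2 j) (\<lambda>\<alpha>. f \<alpha> * g \<alpha>)"
  unfolding polyish_def
proof (intro allI)
  fix j \<alpha>
  obtain p where p: "degree p \<le> d1 j" "\<forall>t. f (\<alpha>(j:=t)) = poly p t"
    using assms(1) unfolding polyish_def by blast
  obtain q where q: "degree q \<le> d2 j" "\<forall>t. g (\<alpha>(j:=t)) = poly q t"
    using assms(2) unfolding polyish_def by blast
  show "\<exists>r. degree r \<le> d1 j + d2 j \<and> (\<forall>t. f (\<alpha>(j := t)) * g (\<alpha>(j := t)) = poly r t)"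
    by (intro exI[of _ "p * q"]) (use p q degree_mult_le[of p q] in auto)
qed

lemma polyish_add:
  assumes "polyish d f" "polyish d g"
  shows "polyish d (\<lambda>\<alpha>. f \<alpha> + g \<alpha>)"
  unfolding polyish_def
proof (intro allI)
  fix j \<alpha>
  obtain p where p: "degree p \<le> d j" "\<forall>t. f (\<alpha>(j:=t)) = poly p t"
    using assms(1) unfolding polyish_def by blast
  obtain q where q: "degree q \<le> d j" "\<forall>t. g (\<alpha>(j:=t)) = poly q t"
    using assms(2) unfolding polyish_def by blast
  show "\<exists>r. degree r \<le> d j \<and> (\<forall>t. f (\<alpha>(j := t)) + g (\<alpha>(j := t)) = poly r t)"
    by (intro exI[of _ "p + q"]) (use p q degree_add_le[of p "d j" q] in auto)
qed

lemma polyish_prod: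
  assumes "finite I" "\<And>i. i \<in> I \<Longrightarrow> polyish (d i) (f i)"
  shows "polyish (\<lambda>j. \<Sum>i\<in>I. d i j) (\<lambda>\<alpha>. \<Prod>i\<in>I. f i \<alpha>)"
  using assms
proof (induction I rule: finite_induct)
  case empty
  then show ?case using polyish_const[of _ 1] by simp
next
  case (insert x F)
  have "polyish (\<lambda>j. d x j + (\<Sum>i\<in>F. d i j)) (\<lambda>\<alpha>. f x \<alpha> * (\<Prod>i\<in>F. f i \<alpha>))"
    using insert by (intro polyish_mult) auto
  then show ?case using insert by simp
qed

lemma polyish_sum:
  assumes "finite I" "\<And>i. i \<in> I \<Longrightarrow> polyish d (f i)"
  shows "polyish d (\<lambda>\<alpha>. \<Sum>i\<in>I. f i \<alpha>)"
  using assms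
proof (induction I rule: finite_induct)
  case empty
  then show ?case using polyish_const[of _ 0] by simp
next
  case (insert x F)
  have "polyish d (\<lambda>\<alpha>. f x \<alpha> + (\<Sum>i\<in>F. f i \<alpha>))"
    using insert by (intro polyish_add) auto
  then show ?case using insert by simp
qed

lemma polyish_inj_aux:
  fixes f :: "(nat \<Rightarrow> 'a::{finite,field}) \<Rightarrow> 'a"
  assumes "polyish d f" "\<forall>j<m. d j + j < card (UNIV::'a set)"
    "\<forall>j\<ge>m. \<alpha>1 j = \<alpha>0 j" "f \<alpha>1 \<noteq> 0"
  shows "\<exists>\<alpha>. (\<forall>j\<ge>m. \<alpha> j = \<alpha>0 j) \<and> inj_on \<alpha> {..<m} \<and> f \<alpha> \<noteq> 0"
  using assms
proof (induction m arbitrary: f \<alpha>0 \<alpha>1)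
  case 0
  then show ?case by (intro exI[of _ \<alpha>1]) auto
next
  case (Suc m)
  define f' where "f' = (\<lambda>\<alpha>. f (\<alpha>(m := \<alpha>1 m)))"
  have pf': "polyish d f'"
    unfolding polyish_def
  proof (intro allI)
    fix j \<alpha>
    show "\<exists>p. degree p \<le> d j \<and> (\<forall>t. f' (\<alpha>(j := t)) = poly p t)"
    proof (cases "j = m")
      case True
      then show ?thesis unfolding f'_def by (intro exI[of _ "[:f (\<alpha>(m := \<alpha>1 m)):]"]) auto
    next
      case False
      obtain p where p: "degree p \<le> d j" "\<forall>t. f ((\<alpha>(m := \<alpha>1 m))(j:=t)) = poly p t"
        using Suc.prems(1) unfolding polyish_def by blast
      have "\<forall>t. f' (\<alpha>(j := t)) = poly p t"
        using p(2) False unfolding f'_def by (simp add: fun_upd_twist)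
      then show ?thesis using p(1) by blast
    qed
  qed
  have "f' (\<alpha>1(m := \<alpha>0 m)) \<noteq> 0" unfolding f'_def using Suc.prems(4) by simp
  moreover have "\<forall>j\<ge>m. (\<alpha>1(m := \<alpha>0 m)) j = \<alpha>0 j" using Suc.prems(3) by auto
  moreover have "\<forall>j<m. d j + j < card (UNIV::'a set)" using Suc.prems(2) by auto
  ultimately have "\<exists>\<alpha>. (\<forall>j\<ge>m. \<alpha> j = \<alpha>0 j) \<and> inj_on \<alpha> {..<m} \<and> f' \<alpha> \<noteq> 0"
    using Suc.IH[OF pf'] by blast
  then obtain \<alpha> where a: "\<forall>j\<ge>m. \<alpha> j = \<alpha>0 j" "inj_on \<alpha> {..<m}" "f' \<alpha> \<noteq> 0"
    by blast
  obtain p where p: "degree p \<le> d m" "\<forall>t. f (\<alpha>(m:=t)) = poly p t"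
    using Suc.prems(1) unfolding polyish_def by blast
  have "p \<noteq> 0" using a(3) p(2) unfolding f'_def by (metis poly_0)
  define B where "B = \<alpha> ` {..<m} \<union> {t. poly p t = 0}"
  have "card B \<le> card (\<alpha> ` {..<m}) + card {t. poly p t = 0}"
    unfolding B_def by (rule card_Un_le)
  also have "\<dots> \<le> m + d m"
    using card_poly_roots_bound[OF \<open>p \<noteq> 0\<close>] p(1) card_image_le[of "{..<m}" \<alpha>] by simp
  also have "\<dots> < card (UNIV::'a set)" using Suc.prems(2) by (metis add.commute lessI)
  finally have "B \<noteq> UNIV" by auto
  then obtain t where t: "t \<notin> B" by auto
  show ?case
  proof (intro exI[of _ "\<alpha>(m := t)"] conjI)
    show "\<forall>j\<ge>Suc m. (\<alpha>(m := t)) j = \<alpha>0 j" using a(1) by auto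
    show "inj_on (\<alpha>(m := t)) {..<Suc m}"
      using a(2) t unfolding B_def by (auto simp: inj_on_def lessThan_Suc)
    show "f (\<alpha>(m := t)) \<noteq> 0" using t p(2) unfolding B_def by auto
  qed
qed

lemma polyish_inj:
  fixes f :: "(nat \<Rightarrow> 'a::{finite,field}) \<Rightarrow> 'a"
  assumes "polyish d f" "\<forall>j<m. d j + j < card (UNIV::'a set)" "f \<alpha>1 \<noteq> 0"
  shows "\<exists>\<alpha>. inj_on \<alpha> {..<m} \<and> f \<alpha> \<noteq> 0"
  using polyish_inj_aux[OF assms(1,2), of \<alpha>1 \<alpha>1] assms(3) by blast

locale cfg =
  fixes n k :: nat and M :: "nat \<Rightarrow> nat \<Rightarrow> bool"
  assumes k1: "1 \<le> k" and kn: "k \<le> n"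
    and mds: "MDS_condition n k M"
    and wt: "\<forall>i<k. card (supp n M i) = n - k + 1"
    and lin: "\<forall>i<k. \<forall>i'<k. i \<noteq> i' \<longrightarrow> card (zero_set n M i \<inter> zero_set n M i') \<le> 1"
begin

abbreviation Z where "Z t \<equiv> zero_set n M t"

definition S :: "nat \<Rightarrow> nat set" where "S j = {t. t < k \<and> j \<in> Z t}"
definition hu :: "nat \<Rightarrow> bool" where "hu j \<longleftrightarrow> (\<exists>u\<in>S j. 1 \<le> u \<and> u - 1 \<notin> S j)"
definition us :: "nat \<Rightarrow> nat" where "us j = (LEAST u. u \<in> S j \<and> 1 \<le> u \<and> u - 1 \<notin> S j)"
definition NS :: "nat \<Rightarrow> nat set" where "NS t = {j \<in> Z t. 2 \<le> card (S j)}"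
definition SG :: "nat \<Rightarrow> nat set" where "SG t = {j \<in> Z t. S j = {t}}"
definition U :: "nat \<Rightarrow> nat set" where "U t = (\<lambda>j. us j - 1) ` {j \<in> NS t. hu j \<and> us j \<le> t}"
definition Mis :: "nat \<Rightarrow> nat set" where "Mis t = {..<t} - U t"
definition W :: "nat \<Rightarrow> nat set" where "W t = {u. t < u \<and> u < k}"

lemma Z_sub: "Z t \<subseteq> {..<n}" unfolding zero_set_def by auto
lemma finZ: "finite (Z t)" using Z_sub finite_subset by blast

lemma cardZ: assumes "t < k" shows "card (Z t) = k - 1"
proof -
  have "Z t \<union> supp n M t = {..<n}" "Z t \<inter> supp n M t = {}"
    unfolding zero_set_def supp_def by auto
  moreover have "finite (supp n M t)" unfolding supp_def by auto
  ultimately have "card (Z t) + card (supp n M t) = n"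
    using card_Un_disjoint[OF finZ, of "supp n M t" t] by simp
  moreover have "card (supp n M t) = n - k + 1" using wt assms by blast
  ultimately show ?thesis using kn k1 by linarith
qed

lemma S_sub: "S j \<subseteq> {..<k}" unfolding S_def by auto
lemma finS: "finite (S j)" using S_sub finite_subset by blast
lemma S_iff: "t \<in> S j \<longleftrightarrow> t < k \<and> j \<in> Z t" unfolding S_def by auto

lemma S_not_all: assumes "j < n" shows "\<exists>i<k. i \<notin> S j"
proof -
  have "0 \<in> {..<k}" using k1 by simp
  then have ne: "{..<k} \<noteq> {}" by blast
  have "card (\<Union>i\<in>{..<k}. supp n M i) \<ge> n - k + card {..<k}"
    using mds ne unfolding MDS_condition_def by blast
  then have c: "card (\<Union>i\<in>{..<k}. supp n M i) \<ge> n" using kn by simp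
  have sub: "(\<Union>i\<in>{..<k}. supp n M i) \<subseteq> {..<n}" unfolding supp_def by auto
  then have "(\<Union>i\<in>{..<k}. supp n M i) = {..<n}"
    using c by (intro card_seteq) auto
  then obtain i where "i < k" "j \<in> supp n M i" using assms by auto
  then show ?thesis unfolding S_def supp_def zero_set_def by auto
qed

lemma linS:
  assumes "t \<noteq> u" "t \<in> S j" "u \<in> S j" "t \<in> S j'" "u \<in> S j'"
  shows "j = j'"
proof (rule ccontr)
  assume ne: "j \<noteq> j'"
  have "t < k" "u < k" using assms S_iff by auto
  have "{j, j'} \<subseteq> Z t \<inter> Z u" using assms S_iff by auto
  then have "card {j, j'} \<le> card (Z t \<inter> Z u)" by (intro card_mono) (simp_all add: finZ)
  also have "\<dots> \<le> 1" using lin \<open>t < k\<close> \<open>u < k\<close> assms(1) by simp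
  finally show False using ne by simp
qed

lemma us_props:
  assumes "hu j" shows "us j \<in> S j" "1 \<le> us j" "us j - 1 \<notin> S j"
proof -
  obtain u where "u \<in> S j \<and> 1 \<le> u \<and> u - 1 \<notin> S j" using assms unfolding hu_def by blast
  then have "us j \<in> S j \<and> 1 \<le> us j \<and> us j - 1 \<notin> S j"
    unfolding us_def by (rule LeastI)
  then show "us j \<in> S j" "1 \<le> us j" "us j - 1 \<notin> S j" by auto
qed

lemma us_le: "u \<in> S j \<Longrightarrow> 1 \<le> u \<Longrightarrow> u - 1 \<notin> S j \<Longrightarrow> us j \<le> u"
  unfolding us_def by (rule Least_le) auto

lemma notuseful_down:
  assumes "t \<in> S j" "\<not> (hu j \<and> us j \<le> t)" "u \<le> t"
  shows "u \<in> S j"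
proof -
  have "\<forall>d. d \<le> t \<longrightarrow> t - d \<in> S j"
  proof
    fix d show "d \<le> t \<longrightarrow> t - d \<in> S j"
    proof (induction d)
      case 0 then show ?case using assms(1) by simp
    next
      case (Suc d)
      show ?case
      proof
        assume "Suc d \<le> t"
        then have a: "t - d \<in> S j" "1 \<le> t - d" using Suc by auto
        show "t - Suc d \<in> S j"
        proof (rule ccontr)
          assume "t - Suc d \<notin> S j"
          moreover have "t - d - 1 = t - Suc d" by simp
          ultimately have b: "t - d - 1 \<notin> S j" by simp
          then have "hu j" using a unfolding hu_def by blast
          moreover have "us j \<le> t - d" using us_le[OF a(1) a(2) b] .
          ultimately show False using assms(2) by auto
        qed
      qed
    qed
  qed
  then have "t - (t - u) \<in> S j" by simp
  moreover have "t - (t - u) = u" using assms(3) by simp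
  ultimately show ?thesis by simp
qed

lemma case3_zero:
  assumes "hu j" "us j = t" "2 \<le> card (S j)" "\<forall>u\<in>S j. u \<le> t"
  shows "0 \<in> S j"
proof (rule ccontr)
  assume z: "0 \<notin> S j"
  have ne: "S j \<noteq> {}" using assms(3) by auto
  define m where "m = Min (S j)"
  have mS: "m \<in> S j" unfolding m_def using ne finS by simp
  have "t \<in> S j" using us_props[OF assms(1)] assms(2) by simp
  obtain u where u: "u \<in> S j" "u \<noteq> t"
  proof -
    have "\<not> S j \<subseteq> {t}"
    proof
      assume "S j \<subseteq> {t}"
      then have "card (S j) \<le> card {t}" by (intro card_mono) auto
      then show False using assms(3) by simp
    qed
    then show ?thesis using that by blast
  qed
  then have "u < t" using assms(4) by fastforce
  have "m \<le> u" unfolding m_def using u finS by simp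
  have "1 \<le> m" using mS z by (cases m) auto
  have "m - 1 \<notin> S j"
  proof
    assume "m - 1 \<in> S j"
    then have "m \<le> m - 1" unfolding m_def using finS by simp
    then show False using \<open>1 \<le> m\<close> by simp
  qed
  then have "us j \<le> m" using us_le[OF mS \<open>1 \<le> m\<close>] by simp
  then show False using \<open>m \<le> u\<close> \<open>u < t\<close> assms(2) by simp
qed

lemma Z_split:
  assumes "t < k"
  shows "Z t = NS t \<union> SG t" "NS t \<inter> SG t = {}"
proof -
  show "NS t \<inter> SG t = {}" unfolding NS_def SG_def by auto
  show "Z t = NS t \<union> SG t"
  proof
    show "NS t \<union> SG t \<subseteq> Z t" unfolding NS_def SG_def by auto
    show "Z t \<subseteq> NS t \<union> SG t"
    proof
      fix j assume j: "j \<in> Z t"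
      then have tS: "t \<in> S j" using assms S_iff by auto
      show "j \<in> NS t \<union> SG t"
      proof (cases "2 \<le> card (S j)")
        case True then show ?thesis using j unfolding NS_def by auto
      next
        case False
        have "card (S j) \<noteq> 0" using tS finS by auto
        then have "card (S j) = 1" using False by linarith
        then obtain x where "S j = {x}" by (meson card_1_singletonE)
        then have "S j = {t}" using tS by auto
        then show ?thesis using j unfolding SG_def by auto
      qed
    qed
  qed
qed

lemma NS_facts: assumes "j \<in> NS t" "t < k" shows "t \<in> S j" "j < n"
  using assms unfolding NS_def S_def zero_set_def by auto

lemma classify:
  assumes t: "1 \<le> t" "t < k" and h_def: "h = (\<lambda>j. if hu j \<and> us j < t then us j - 1
       else if hu j \<and> us j = t then (if \<exists>u\<in>S j. t < u then Max (S j) else t - 1)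
       else if \<exists>u\<in>S j. t < u then Max (S j)
       else if (\<exists>j'\<in>NS t. hu j' \<and> us j' = t) then t - 1 else t + 1)"
    and j: "j \<in> NS t"
  shows "(h j = us j - 1 \<and> hu j \<and> us j < t)
       \<or> (h j = t - 1 \<and> 0 \<in> S j \<and> t - 1 \<in> U t)
       \<or> (h j = Max (S j) \<and> Max (S j) \<in> S j \<and> t < Max (S j) \<and> (hu j \<and> us j \<le> t \<longrightarrow> us j = t))
       \<or> (h j = t + 1 \<and> \<not> (hu j \<and> us j \<le> t) \<and> \<not> (\<exists>j'\<in>NS t. hu j' \<and> us j' = t) \<and> t + 1 < k)"
proof -
  have tS: "t \<in> S j" and jn: "j < n" using NS_facts[OF j t(2)] by auto
  have cardS: "2 \<le> card (S j)" using j unfolding NS_def by auto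
  have Smax: "Max (S j) \<in> S j \<and> t < Max (S j)" if ex: "\<exists>u\<in>S j. t < u"
  proof -
    obtain u where "u \<in> S j" "t < u" using ex by blast
    moreover have "u \<le> Max (S j)" using \<open>u \<in> S j\<close> finS by simp
    ultimately show ?thesis using finS by (metis Max_in empty_iff order_less_le_trans)
  qed
  show ?thesis
  proof (cases "hu j \<and> us j < t")
    case True then show ?thesis unfolding h_def by simp
  next
    case n1: False
    show ?thesis
    proof (cases "hu j \<and> us j = t")
      case True
      show ?thesis
      proof (cases "\<exists>u\<in>S j. t < u")
        case True2: True
        then show ?thesis using n1 True Smax unfolding h_def by auto
      next
        case False
        then have le: "\<forall>u\<in>S j. u \<le> t" by auto
        have "0 \<in> S j" using case3_zero[of j t] True cardS le by auto
        moreover have "t - 1 \<in> U t" unfolding U_def using True j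
          by (intro image_eqI[of _ _ j]) auto
        ultimately show ?thesis using n1 True False unfolding h_def by auto
      qed
    next
      case n2: False
      have nu: "\<not> (hu j \<and> us j \<le> t)" using n1 n2 by auto
      show ?thesis
      proof (cases "\<exists>u\<in>S j. t < u")
        case True
        then show ?thesis using n1 n2 Smax nu unfolding h_def by auto
      next
        case nx: False
        show ?thesis
        proof (cases "\<exists>j'\<in>NS t. hu j' \<and> us j' = t")
          case True
          then obtain j' where j': "j' \<in> NS t" "hu j'" "us j' = t" by blast
          have "t - 1 \<in> U t" unfolding U_def using j' by (intro image_eqI[of _ _ j']) auto
          moreover have "0 \<in> S j" using notuseful_down[OF tS nu] by simp
          ultimately show ?thesis using n1 n2 nx True unfolding h_def by auto
        next
          case False
          obtain i where i: "i < k" "i \<notin> S j" using S_not_all[OF jn] by blast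
          have "\<not> i \<le> t" using notuseful_down[OF tS nu] i by blast
          then have "t + 1 < k" using i by linarith
          then show ?thesis using n1 n2 nx False nu unfolding h_def by auto
        qed
      qed
    qed
  qed
qed

lemma key_card:
  assumes t: "1 \<le> t" "t < k"
  shows "card (NS t) \<le> card (U t) + card (W t)"
proof -
  define h where "h = (\<lambda>j. if hu j \<and> us j < t then us j - 1
       else if hu j \<and> us j = t then (if \<exists>u\<in>S j. t < u then Max (S j) else t - 1)
       else if \<exists>u\<in>S j. t < u then Max (S j)
       else if (\<exists>j'\<in>NS t. hu j' \<and> us j' = t) then t - 1 else t + 1)"
  note cl = classify[OF t h_def]
  have inj: "inj_on h (NS t)"
  proof (rule inj_onI)
    fix j1 j2 assume j1: "j1 \<in> NS t" and j2: "j2 \<in> NS t" and eq: "h j1 = h j2"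
    have t1: "t \<in> S j1" and t2: "t \<in> S j2" using NS_facts j1 j2 t by auto
    have u1: "1 \<le> us j1" if "hu j1" using us_props(2)[OF that] .
    have u2: "1 \<le> us j2" if "hu j2" using us_props(2)[OF that] .
    have z: "j1 = j2" if "0 \<in> S j1" "0 \<in> S j2"
      using linS[of 0 t j1 j2] that t1 t2 t by auto
    have nz1: "0 \<in> S j1" if "\<not> (hu j1 \<and> us j1 \<le> t)" using notuseful_down[OF t1 that] by simp
    have nz2: "0 \<in> S j2" if "\<not> (hu j2 \<and> us j2 \<le> t)" using notuseful_down[OF t2 that] by simp
    have AA: "j1 = j2" if a: "hu j1" "hu j2" "h j1 = us j1 - 1" "h j2 = us j2 - 1" "us j1 < t"
    proof -
      have e: "us j1 = us j2" using eq u1 u2 a by simp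
      have "us j1 \<in> S j1" "us j1 \<in> S j2" using us_props(1)[OF a(1)] us_props(1)[OF a(2)] e by auto
      moreover have "us j1 \<noteq> t" using a(5) by simp
      ultimately show ?thesis using linS[of "us j1" t j1 j2] t1 t2 by auto
    qed
    have CC: "j1 = j2" if a: "h j1 = Max (S j1)" "Max (S j1) \<in> S j1" "t < Max (S j1)"
        "h j2 = Max (S j2)" "Max (S j2) \<in> S j2"
      using linS[of "Max (S j1)" t j1 j2] eq t1 t2 a by auto
    have cases1: "(h j1 = us j1 - 1 \<and> hu j1 \<and> us j1 < t) \<or> (h j1 = t - 1 \<and> 0 \<in> S j1 \<and> t - 1 \<in> U t) \<or> (h j1 = Max (S j1) \<and> Max (S j1) \<in> S j1 \<and> t < Max (S j1) \<and> (hu j1 \<and> us j1 \<le> t \<longrightarrow> us j1 = t)) \<or> (h j1 = t + 1 \<and> \<not> (hu j1 \<and> us j1 \<le> t) \<and> \<not> (\<exists>j'\<in>NS t. hu j' \<and> us j' = t) \<and> t + 1 < k)" using cl[OF j1] .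
    have cases2: "(h j2 = us j2 - 1 \<and> hu j2 \<and> us j2 < t) \<or> (h j2 = t - 1 \<and> 0 \<in> S j2 \<and> t - 1 \<in> U t) \<or> (h j2 = Max (S j2) \<and> Max (S j2) \<in> S j2 \<and> t < Max (S j2) \<and> (hu j2 \<and> us j2 \<le> t \<longrightarrow> us j2 = t)) \<or> (h j2 = t + 1 \<and> \<not> (hu j2 \<and> us j2 \<le> t) \<and> \<not> (\<exists>j'\<in>NS t. hu j' \<and> us j' = t) \<and> t + 1 < k)" using cl[OF j2] .
    show "j1 = j2"
    proof -
      have "j1 = j2" if x: "h j1 = us j1 - 1 \<and> hu j1 \<and> us j1 < t" and y: "h j2 = us j2 - 1 \<and> hu j2 \<and> us j2 < t"
        using x y AA by blast
      note cAA = this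
      have "j1 = j2" if x: "h j1 = us j1 - 1 \<and> hu j1 \<and> us j1 < t" and y: "h j2 = t - 1 \<and> 0 \<in> S j2 \<and> t - 1 \<in> U t"
        using x y eq u1 by auto
      note cAB = this
      have "j1 = j2" if x: "h j1 = us j1 - 1 \<and> hu j1 \<and> us j1 < t" and y: "h j2 = Max (S j2) \<and> Max (S j2) \<in> S j2 \<and> t < Max (S j2) \<and> (hu j2 \<and> us j2 \<le> t \<longrightarrow> us j2 = t)"
        using x y eq by auto
      note cAC = this
      have "j1 = j2" if x: "h j1 = us j1 - 1 \<and> hu j1 \<and> us j1 < t" and y: "h j2 = t + 1 \<and> \<not> (hu j2 \<and> us j2 \<le> t) \<and> \<not> (\<exists>j'\<in>NS t. hu j' \<and> us j' = t) \<and> t + 1 < k"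
        using x y eq by auto
      note cAD = this
      have "j1 = j2" if x: "h j1 = t - 1 \<and> 0 \<in> S j1 \<and> t - 1 \<in> U t" and y: "h j2 = us j2 - 1 \<and> hu j2 \<and> us j2 < t"
        using x y eq u2 by auto
      note cBA = this
      have "j1 = j2" if x: "h j1 = t - 1 \<and> 0 \<in> S j1 \<and> t - 1 \<in> U t" and y: "h j2 = t - 1 \<and> 0 \<in> S j2 \<and> t - 1 \<in> U t"
        using x y z by blast
      note cBB = this
      have "j1 = j2" if x: "h j1 = t - 1 \<and> 0 \<in> S j1 \<and> t - 1 \<in> U t" and y: "h j2 = Max (S j2) \<and> Max (S j2) \<in> S j2 \<and> t < Max (S j2) \<and> (hu j2 \<and> us j2 \<le> t \<longrightarrow> us j2 = t)"
        using x y eq t by auto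
      note cBC = this
      have "j1 = j2" if x: "h j1 = t - 1 \<and> 0 \<in> S j1 \<and> t - 1 \<in> U t" and y: "h j2 = t + 1 \<and> \<not> (hu j2 \<and> us j2 \<le> t) \<and> \<not> (\<exists>j'\<in>NS t. hu j' \<and> us j' = t) \<and> t + 1 < k"
        using x y eq t by auto
      note cBD = this
      have "j1 = j2" if x: "h j1 = Max (S j1) \<and> Max (S j1) \<in> S j1 \<and> t < Max (S j1) \<and> (hu j1 \<and> us j1 \<le> t \<longrightarrow> us j1 = t)" and y: "h j2 = us j2 - 1 \<and> hu j2 \<and> us j2 < t"
        using x y eq by auto
      note cCA = this
      have "j1 = j2" if x: "h j1 = Max (S j1) \<and> Max (S j1) \<in> S j1 \<and> t < Max (S j1) \<and> (hu j1 \<and> us j1 \<le> t \<longrightarrow> us j1 = t)" and y: "h j2 = t - 1 \<and> 0 \<in> S j2 \<and> t - 1 \<in> U t"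
        using x y eq t by auto
      note cCB = this
      have "j1 = j2" if x: "h j1 = Max (S j1) \<and> Max (S j1) \<in> S j1 \<and> t < Max (S j1) \<and> (hu j1 \<and> us j1 \<le> t \<longrightarrow> us j1 = t)" and y: "h j2 = Max (S j2) \<and> Max (S j2) \<in> S j2 \<and> t < Max (S j2) \<and> (hu j2 \<and> us j2 \<le> t \<longrightarrow> us j2 = t)"
        using x y CC by blast
      note cCC = this
      have "j1 = j2" if x: "h j1 = Max (S j1) \<and> Max (S j1) \<in> S j1 \<and> t < Max (S j1) \<and> (hu j1 \<and> us j1 \<le> t \<longrightarrow> us j1 = t)" and y: "h j2 = t + 1 \<and> \<not> (hu j2 \<and> us j2 \<le> t) \<and> \<not> (\<exists>j'\<in>NS t. hu j' \<and> us j' = t) \<and> t + 1 < k"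
        using x y z nz1 nz2 j1 by blast
      note cCD = this
      have "j1 = j2" if x: "h j1 = t + 1 \<and> \<not> (hu j1 \<and> us j1 \<le> t) \<and> \<not> (\<exists>j'\<in>NS t. hu j' \<and> us j' = t) \<and> t + 1 < k" and y: "h j2 = us j2 - 1 \<and> hu j2 \<and> us j2 < t"
        using x y eq by auto
      note cDA = this
      have "j1 = j2" if x: "h j1 = t + 1 \<and> \<not> (hu j1 \<and> us j1 \<le> t) \<and> \<not> (\<exists>j'\<in>NS t. hu j' \<and> us j' = t) \<and> t + 1 < k" and y: "h j2 = t - 1 \<and> 0 \<in> S j2 \<and> t - 1 \<in> U t"
        using x y eq t by auto
      note cDB = this
      have "j1 = j2" if x: "h j1 = t + 1 \<and> \<not> (hu j1 \<and> us j1 \<le> t) \<and> \<not> (\<exists>j'\<in>NS t. hu j' \<and> us j' = t) \<and> t + 1 < k" and y: "h j2 = Max (S j2) \<and> Max (S j2) \<in> S j2 \<and> t < Max (S j2) \<and> (hu j2 \<and> us j2 \<le> t \<longrightarrow> us j2 = t)"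
        using x y z nz1 nz2 j2 by blast
      note cDC = this
      have "j1 = j2" if x: "h j1 = t + 1 \<and> \<not> (hu j1 \<and> us j1 \<le> t) \<and> \<not> (\<exists>j'\<in>NS t. hu j' \<and> us j' = t) \<and> t + 1 < k" and y: "h j2 = t + 1 \<and> \<not> (hu j2 \<and> us j2 \<le> t) \<and> \<not> (\<exists>j'\<in>NS t. hu j' \<and> us j' = t) \<and> t + 1 < k"
        using x y z nz1 nz2 by blast
      note cDD = this
      show ?thesis using cases1
      proof (elim disjE)
        assume x: "h j1 = us j1 - 1 \<and> hu j1 \<and> us j1 < t"
        show ?thesis using cases2 cAA[OF x] cAB[OF x] cAC[OF x] cAD[OF x] by blast
      next
        assume x: "h j1 = t - 1 \<and> 0 \<in> S j1 \<and> t - 1 \<in> U t"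
        show ?thesis using cases2 cBA[OF x] cBB[OF x] cBC[OF x] cBD[OF x] by blast
      next
        assume x: "h j1 = Max (S j1) \<and> Max (S j1) \<in> S j1 \<and> t < Max (S j1) \<and> (hu j1 \<and> us j1 \<le> t \<longrightarrow> us j1 = t)"
        show ?thesis using cases2 cCA[OF x] cCB[OF x] cCC[OF x] cCD[OF x] by blast
      next
        assume x: "h j1 = t + 1 \<and> \<not> (hu j1 \<and> us j1 \<le> t) \<and> \<not> (\<exists>j'\<in>NS t. hu j' \<and> us j' = t) \<and> t + 1 < k"
        show ?thesis using cases2 cDA[OF x] cDB[OF x] cDC[OF x] cDD[OF x] by blast
      qed
    qed
  qed
  have rng: "h ` NS t \<subseteq> U t \<union> W t"
  proof
    fix x assume "x \<in> h ` NS t"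
    then obtain j where j: "j \<in> NS t" "x = h j" by blast
    from cl[OF j(1)] show "x \<in> U t \<union> W t"
    proof (elim disjE conjE)
      assume "h j = us j - 1" "hu j" "us j < t"
      then show ?thesis unfolding U_def using j by auto
    next
      assume "h j = Max (S j)" "Max (S j) \<in> S j" "t < Max (S j)"
      then show ?thesis unfolding W_def using j S_iff by auto
    qed (use j in \<open>auto simp: W_def\<close>)
  qed
  have fU: "finite (U t \<union> W t)" unfolding U_def W_def NS_def using finZ by auto
  have "card (NS t) \<le> card (U t \<union> W t)"
    using card_inj_on_le[OF inj rng fU] .
  also have "\<dots> \<le> card (U t) + card (W t)" by (rule card_Un_le)
  finally show ?thesis .
qed

lemma U_sub: "U t \<subseteq> {..<t}"
  unfolding U_def using us_props(2) by fastforce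

lemma card_W: "card (W t) = k - 1 - t"
proof -
  have "W t = {t<..<k}" unfolding W_def by auto
  then show ?thesis by simp
qed

lemma Mis_SG: assumes "t < k" shows "card (Mis t) \<le> card (SG t)"
proof (cases "t = 0")
  case True then show ?thesis unfolding Mis_def by simp
next
  case False
  have fU: "finite (U t)" using U_sub finite_subset by blast
  have cM: "card (Mis t) = t - card (U t)"
    unfolding Mis_def using card_Diff_subset[OF fU U_sub] by simp
  have "card (Z t) = card (NS t) + card (SG t)"
    using Z_split[OF assms] card_Un_disjoint finZ
    by (metis finite_Un)
  then have cS: "card (SG t) = k - 1 - card (NS t)" using cardZ[OF assms] by simp
  have "card (NS t) \<le> card (U t) + (k - 1 - t)"
    using key_card[of t] False assms card_W by simp
  moreover have "card (NS t) \<le> k - 1" using \<open>card (Z t) = card (NS t) + card (SG t)\<close> cardZ[OF assms] by simp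
  moreover have "card (U t) \<le> t" using card_mono[OF _ U_sub] by fastforce
  ultimately show ?thesis using cM cS assms by linarith
qed

end

context cfg
begin

lemma witness:
  fixes b :: "nat \<Rightarrow> 'a" and \<gamma> :: 'a
  assumes b: "inj_on b {..<k}" and g0: "\<gamma> \<notin> b ` {..<k}"
  shows "\<exists>\<alpha>. \<forall>t<k. (\<forall>l<t. \<exists>j\<in>Z t. \<alpha> j = b l) \<and> (\<forall>j\<in>Z t. \<alpha> j \<noteq> b t)"
proof -
  have "\<forall>t. \<exists>g. t < k \<longrightarrow> g ` Mis t \<subseteq> SG t \<and> inj_on g (Mis t)"
  proof
    fix t
    show "\<exists>g. t < k \<longrightarrow> g ` Mis t \<subseteq> SG t \<and> inj_on g (Mis t)"
    proof (cases "t < k")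
      case True
      have "finite (Mis t)" unfolding Mis_def by simp
      moreover have "finite (SG t)" unfolding SG_def using finZ by simp
      ultimately show ?thesis using card_le_inj Mis_SG[OF True] by blast
    qed simp
  qed
  then obtain g where g: "\<forall>t. t < k \<longrightarrow> g t ` Mis t \<subseteq> SG t \<and> inj_on (g t) (Mis t)"
    by metis
  define P where "P = (\<lambda>j w. \<exists>t<k. w \<in> Mis t \<and> g t w = j \<and> S j = {t})"
  define \<alpha> where "\<alpha> = (\<lambda>j. if 2 \<le> card (S j) then (if hu j then b (us j - 1) else \<gamma>)
     else if \<exists>w. P j w then b (SOME w. P j w) else \<gamma>)"
  have C2: "\<alpha> j \<noteq> b t" if t: "t < k" and j: "j \<in> Z t" for t j
  proof -
    have tS: "t \<in> S j" using t j S_iff by auto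
    show ?thesis
    proof (cases "2 \<le> card (S j)")
      case True
      show ?thesis
      proof (cases "hu j")
        case True2: True
        have "us j < k" using us_props(1)[OF True2] S_iff by auto
        then have "us j - 1 < k" by simp
        moreover have "us j - 1 \<noteq> t" using us_props(3)[OF True2] tS by auto
        ultimately have "b (us j - 1) \<noteq> b t" using b t by (meson inj_onD lessThan_iff)
        then show ?thesis unfolding \<alpha>_def using True True2 by simp
      next
        case False
        then show ?thesis unfolding \<alpha>_def using True g0 t by auto
      qed
    next
      case False
      show ?thesis
      proof (cases "\<exists>w. P j w")
        case True
        then have "P j (SOME w. P j w)" by (rule someI_ex)
        then obtain t' where t': "t' < k" "(SOME w. P j w) \<in> Mis t'" "S j = {t'}"
          unfolding P_def by blast
        then have "t' = t" using tS by auto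
        then have "(SOME w. P j w) < t" using t'(2) unfolding Mis_def by auto
        then have "b (SOME w. P j w) \<noteq> b t" using b t by (metis inj_onD lessThan_iff less_trans less_irrefl)
        then show ?thesis unfolding \<alpha>_def using False True by simp
      next
        case False2: False
        then show ?thesis unfolding \<alpha>_def using False g0 t by auto
      qed
    qed
  qed
  have C1: "\<exists>j\<in>Z t. \<alpha> j = b l" if t: "t < k" and l: "l < t" for t l
  proof (cases "l \<in> U t")
    case True
    then obtain j where j: "j \<in> NS t" "hu j" "us j \<le> t" "l = us j - 1"
      unfolding U_def by blast
    have "\<alpha> j = b l" unfolding \<alpha>_def using j unfolding NS_def by simp
    then show ?thesis using j unfolding NS_def by blast
  next
    case False
    then have lM: "l \<in> Mis t" unfolding Mis_def using l by simp
    define j where "j = g t l"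
    have jSG: "j \<in> SG t" unfolding j_def using g t lM by blast
    then have jZ: "j \<in> Z t" and Sj: "S j = {t}" unfolding SG_def by auto
    have "P j l" unfolding P_def j_def using t lM Sj j_def by blast
    then have ex: "\<exists>w. P j w" by blast
    then have "P j (SOME w. P j w)" by (rule someI_ex)
    then obtain t' where t': "t' < k" "(SOME w. P j w) \<in> Mis t'" "g t' (SOME w. P j w) = j" "S j = {t'}"
      unfolding P_def by blast
    then have "t' = t" using Sj by auto
    then have "(SOME w. P j w) = l" using t' g t lM j_def by (metis inj_onD)
    moreover have "\<not> 2 \<le> card (S j)" using Sj by simp
    ultimately have "\<alpha> j = b l" unfolding \<alpha>_def using ex by simp
    then show ?thesis using jZ by blast
  qed
  show ?thesis using C1 C2 by blast
qed

lemma card_S_le: "card (S j) \<le> k - 1"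
proof (cases "j < n")
  case True
  obtain i where i: "i < k" "i \<notin> S j" using S_not_all[OF True] by blast
  have "S j \<subseteq> {..<k} - {i}" using S_sub i by auto
  then have "card (S j) \<le> card ({..<k} - {i})" by (intro card_mono) auto
  then show ?thesis using i by simp
next
  case False
  then have "S j = {}" unfolding S_def zero_set_def by auto
  then show ?thesis by simp
qed

definition Emat :: "(nat \<Rightarrow> 'a::comm_ring_1) \<Rightarrow> (nat \<Rightarrow> 'a) \<Rightarrow> 'a mat" where
  "Emat b \<alpha> = mat k k (\<lambda>(t,l). \<Prod>j\<in>Z t. (b l - \<alpha> j))"

lemma D_polyish: "polyish (\<lambda>j. k - 1) (\<lambda>\<alpha>. det (Emat b \<alpha>))"
proof -
  have eq: "(\<lambda>\<alpha>. det (Emat b \<alpha>)) = (\<lambda>\<alpha>. \<Sum>p\<in>{p. p permutes {0..<k}}. signof p * (\<Prod>i\<in>{0..<k}. \<Prod>j\<in>Z i. (b (p i) - \<alpha> j)))"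
  proof
    fix \<alpha>
    have "det (Emat b \<alpha>) = (\<Sum>p\<in>{p. p permutes {0..<k}}. signof p * (\<Prod>i = 0..<k. Emat b \<alpha> $$ (i, p i)))"
      unfolding Emat_def by (rule det_def') simp
    also have "\<dots> = (\<Sum>p\<in>{p. p permutes {0..<k}}. signof p * (\<Prod>i\<in>{0..<k}. \<Prod>j\<in>Z i. (b (p i) - \<alpha> j)))"
    proof (rule sum.cong[OF refl])
      fix p assume "p \<in> {p. p permutes {0..<k}}"
      then have "\<forall>i<k. p i < k" by (auto dest: permutes_in_image)
      then show "signof p * (\<Prod>i = 0..<k. Emat b \<alpha> $$ (i, p i)) = signof p * (\<Prod>i\<in>{0..<k}. \<Prod>j\<in>Z i. (b (p i) - \<alpha> j))"
        unfolding Emat_def by (intro arg_cong[where f="\<lambda>x. signof p * x"] prod.cong) auto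
    qed
    finally show "det (Emat b \<alpha>) = (\<Sum>p\<in>{p. p permutes {0..<k}}. signof p * (\<Prod>i\<in>{0..<k}. \<Prod>j\<in>Z i. (b (p i) - \<alpha> j)))" .
  qed
  define d where "d = (\<lambda>j. \<Sum>i\<in>{0..<k}. \<Sum>j'\<in>Z i. (if j = j' then 1 else 0::nat))"
  have dle: "d j \<le> k - 1" for j
  proof -
    have "d j = (\<Sum>i\<in>{0..<k}. if j \<in> Z i then 1 else 0)"
      unfolding d_def using finZ by (intro sum.cong) auto
    also have "\<dots> = card ({0..<k} \<inter> {i. j \<in> Z i})"
      by (simp add: sum.If_cases)
    also have "{0..<k} \<inter> {i. j \<in> Z i} = S j" unfolding S_def by auto
    finally show ?thesis using card_S_le by simp
  qed
  have inner: "polyish (\<lambda>j. \<Sum>j'\<in>Z i. (if j = j' then 1 else 0)) (\<lambda>\<alpha>. \<Prod>j\<in>Z i. (b (p i) - \<alpha> j))" for p i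
    by (rule polyish_prod[OF finZ]) (rule polyish_lin)
  have "polyish d (\<lambda>\<alpha>. \<Prod>i\<in>{0..<k}. \<Prod>j\<in>Z i. (b (p i) - \<alpha> j))" for p
    unfolding d_def by (rule polyish_prod) (auto intro: inner)
  then have "polyish (\<lambda>j. 0 + d j) (\<lambda>\<alpha>. signof p * (\<Prod>i\<in>{0..<k}. \<Prod>j\<in>Z i. (b (p i) - \<alpha> j)))" for p
    by (intro polyish_mult polyish_const)
  then have "polyish d (\<lambda>\<alpha>. \<Sum>p\<in>{p. p permutes {0..<k}}. signof p * (\<Prod>i\<in>{0..<k}. \<Prod>j\<in>Z i. (b (p i) - \<alpha> j)))"
    by (intro polyish_sum) (auto simp: finite_permutations)
  then show ?thesis unfolding eq by (rule polyish_mono) (use dle in auto)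
qed

end

context cfg
begin

lemma good_alpha:
  fixes b :: "nat \<Rightarrow> 'a::{finite,field}" and \<gamma> :: 'a
  assumes b: "inj_on b {..<k}" and g0: "\<gamma> \<notin> b ` {..<k}"
    and card: "n + k - 1 \<le> card (UNIV :: 'a set)"
  shows "\<exists>\<alpha>. inj_on \<alpha> {..<n} \<and> det (Emat b \<alpha>) \<noteq> 0"
proof -
  obtain \<alpha>0 where w: "\<forall>t<k. (\<forall>l<t. \<exists>j\<in>Z t. \<alpha>0 j = b l) \<and> (\<forall>j\<in>Z t. \<alpha>0 j \<noteq> b t)"
    using witness[OF b g0] by blast
  have car: "Emat b \<alpha>0 \<in> carrier_mat k k" unfolding Emat_def by simp
  have ut: "upper_triangular (Emat b \<alpha>0)"
    unfolding upper_triangular_def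
  proof (intro allI impI)
    fix i j assume i: "i < dim_row (Emat b \<alpha>0)" and j: "j < i"
    then have ik: "i < k" unfolding Emat_def by simp
    then obtain j' where jj: "j' \<in> Z i" "\<alpha>0 j' = b j" using w j by blast
    have "b j - \<alpha>0 j' = 0" using jj(2) by simp
    then have "\<exists>a\<in>Z i. b j - \<alpha>0 a = 0" using jj(1) by blast
    then have "(\<Prod>j'\<in>Z i. (b j - \<alpha>0 j')) = 0" using finZ by (intro prod_zero) auto
    then show "Emat b \<alpha>0 $$ (i, j) = 0" unfolding Emat_def using ik j by simp
  qed
  have "det (Emat b \<alpha>0) = prod_list (diag_mat (Emat b \<alpha>0))"
    by (rule det_upper_triangular[OF ut car])
  also have "\<dots> \<noteq> 0"
  proof -
    have "x \<noteq> 0" if "x \<in> set (diag_mat (Emat b \<alpha>0))" for x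
    proof -
      from that obtain i where i: "i < k" "x = Emat b \<alpha>0 $$ (i, i)"
        unfolding diag_mat_def Emat_def by auto
      then have "x = (\<Prod>j\<in>Z i. (b i - \<alpha>0 j))" unfolding Emat_def by simp
      moreover have "\<forall>j\<in>Z i. b i - \<alpha>0 j \<noteq> 0"
      proof
        fix j assume "j \<in> Z i"
        then have "\<alpha>0 j \<noteq> b i" using w i(1) by blast
        then show "b i - \<alpha>0 j \<noteq> 0" by simp
      qed
      ultimately show ?thesis using finZ by simp
    qed
    then show ?thesis by (metis prod_list_zero_iff)
  qed
  finally have ne: "det (Emat b \<alpha>0) \<noteq> 0" .
  have "\<forall>j<n. (k - 1) + j < card (UNIV :: 'a set)" using card k1 kn by auto
  then show ?thesis using polyish_inj[OF D_polyish _ ne] by blast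
qed

lemma weight:
  fixes b \<alpha> :: "nat \<Rightarrow> 'a::field" and c :: "nat \<Rightarrow> 'a"
  assumes inj: "inj_on \<alpha> {..<n}" and D: "det (Emat b \<alpha>) \<noteq> 0"
    and c: "\<exists>i<k. c i \<noteq> 0"
  shows "n - k + 1 \<le> card {j. j < n \<and> (\<Sum>i<k. c i * poly (\<Prod>j'\<in>Z i. [:- \<alpha> j', 1:]) (\<alpha> j)) \<noteq> 0}"
proof -
  define P where "P = (\<lambda>i. \<Prod>j'\<in>Z i. [:- \<alpha> j', 1:])"
  define Q where "Q = (\<Sum>i<k. Polynomial.smult (c i) (P i))"
  have polyQ: "poly Q x = (\<Sum>i<k. c i * poly (P i) x)" for x
    unfolding Q_def by (simp add: poly_sum)
  have polyP: "poly (P i) x = (\<Prod>j\<in>Z i. (x - \<alpha> j))" for i x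
    unfolding P_def by (simp add: poly_prod)
  have Qne: "Q \<noteq> 0"
  proof
    assume Q0: "Q = 0"
    define A where "A = transpose_mat (Emat b \<alpha>)"
    have Ec: "Emat b \<alpha> \<in> carrier_mat k k" unfolding Emat_def by simp
    then have Ac: "A \<in> carrier_mat k k" unfolding A_def by simp
    define v where "v = vec k c"
    have vc: "v \<in> carrier_vec k" unfolding v_def by simp
    have vne: "v \<noteq> 0\<^sub>v k"
    proof
      assume "v = 0\<^sub>v k"
      then have "\<forall>i<k. c i = 0" unfolding v_def by (metis index_vec index_zero_vec(1))
      then show False using c by blast
    qed
    have "A *\<^sub>v v = 0\<^sub>v k"
    proof (rule eq_vecI)
      show "dim_vec (A *\<^sub>v v) = dim_vec (0\<^sub>v k)" using Ac by simp
      fix l assume "l < dim_vec (0\<^sub>v k)"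
      then have l: "l < k" by simp
      have "(A *\<^sub>v v) $ l = (\<Sum>i\<in>{0..<k}. (\<Prod>j\<in>Z i. (b l - \<alpha> j)) * c i)"
        using l Ac unfolding A_def v_def Emat_def by (simp add: scalar_prod_def)
      also have "\<dots> = poly Q (b l)" unfolding polyQ polyP
        by (simp add: atLeast0LessThan mult.commute)
      also have "\<dots> = 0" using Q0 by simp
      finally show "(A *\<^sub>v v) $ l = 0\<^sub>v k $ l" using l by simp
    qed
    then have "det A = 0" using det_0_iff_vec_prod_zero[OF Ac] vc vne by blast
    then show False using D det_transpose[OF Ec] unfolding A_def by simp
  qed
  have degP: "degree (P i) \<le> k - 1" if "i < k" for i
  proof -
    have "degree (P i) \<le> sum (degree \<circ> (\<lambda>j'. [:- \<alpha> j', 1:])) (Z i)"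
      unfolding P_def by (rule degree_prod_sum_le[OF finZ])
    also have "\<dots> = card (Z i)" by simp
    finally show ?thesis using cardZ[OF that] by simp
  qed
  have degQ: "degree Q \<le> k - 1"
    unfolding Q_def
    by (rule degree_sum_le) (use degP degree_smult_le order_trans in blast)+
  define Zs where "Zs = {j. j < n \<and> poly Q (\<alpha> j) = 0}"
  have "\<alpha> ` Zs \<subseteq> {x. poly Q x = 0}" unfolding Zs_def by auto
  then have "card (\<alpha> ` Zs) \<le> card {x. poly Q x = 0}"
    by (intro card_mono poly_roots_finite Qne)
  also have "\<dots> \<le> degree Q" by (rule card_poly_roots_bound[OF Qne])
  finally have "card (\<alpha> ` Zs) \<le> k - 1" using degQ by simp
  moreover have "card (\<alpha> ` Zs) = card Zs"
    by (rule card_image) (use inj in \<open>auto simp: Zs_def intro: inj_on_subset\<close>)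
  ultimately have cZ: "card Zs \<le> k - 1" by simp
  define NZ where "NZ = {j. j < n \<and> (\<Sum>i<k. c i * poly (P i) (\<alpha> j)) \<noteq> 0}"
  have "NZ \<union> Zs = {..<n}" "NZ \<inter> Zs = {}" unfolding NZ_def Zs_def polyQ by auto
  then have "card NZ + card Zs = n"
    by (metis card_Un_disjoint card_lessThan finite_Un finite_lessThan)
  then have "n - k + 1 \<le> card NZ" using cZ k1 kn by linarith
  then show ?thesis unfolding NZ_def P_def .
qed

end

context cfg
begin

lemma main_exists:
  assumes card: "n + k - 1 \<le> card (UNIV :: 'a::{finite,field} set)"
  shows "\<exists>(G :: nat \<Rightarrow> nat \<Rightarrow> 'a) C. fits n k G M \<and> is_generator_matrix n k G C \<and> is_MDS_code n k C"
proof -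
  have "card {0, 1::'a} \<le> card (UNIV :: 'a set)" by (rule card_mono) auto
  then have c2: "2 \<le> card (UNIV :: 'a set)" by simp
  have "card {..k} \<le> card (UNIV :: 'a set)"
  proof (cases "k = 1")
    case True then show ?thesis using c2 by simp
  next
    case False then show ?thesis using card k1 kn by simp
  qed
  then obtain f :: "nat \<Rightarrow> 'a" where f: "inj_on f {..k}"
    using card_le_inj[of "{..k}" "UNIV :: 'a set"] by auto
  define b where "b = f"
  have b: "inj_on b {..<k}" unfolding b_def using f by (rule inj_on_subset) auto
  have g0: "f k \<notin> b ` {..<k}"
  proof
    assume "f k \<in> b ` {..<k}"
    then obtain x where x: "x < k" "f k = f x" unfolding b_def by auto
    then have "k = x" using f by (meson atMost_iff inj_onD less_imp_le order_refl)
    then show False using x by simp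
  qed
  obtain \<alpha> where \<alpha>: "inj_on \<alpha> {..<n}" "det (Emat b \<alpha>) \<noteq> 0"
    using good_alpha[OF b g0 card] by blast
  define G where "G = (\<lambda>i j. poly (\<Prod>j'\<in>Z i. [:- \<alpha> j', 1:]) (\<alpha> j))"
  have W: "n - k + 1 \<le> card {j. j < n \<and> (\<Sum>i<k. c i * G i j) \<noteq> 0}" if "\<exists>i<k. c i \<noteq> 0" for c
    using weight[OF \<alpha> that] unfolding G_def .
  have Gz: "G i j = 0" if "j \<in> Z i" for i j
  proof -
    have "G i j = (\<Prod>j'\<in>Z i. (\<alpha> j - \<alpha> j'))" unfolding G_def by (simp add: poly_prod)
    also have "\<dots> = 0" using that finZ by (intro prod_zero) auto
    finally show ?thesis .
  qed
  have fits: "fits n k G M"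
    unfolding fits_def using Gz unfolding zero_set_def by auto
  have indep: "rows_independent n k G"
    unfolding rows_independent_def
  proof (rule allI, rule impI)
    fix c assume h: "\<forall>j<n. (\<Sum>i<k. c i * G i j) = 0"
    show "\<forall>i<k. c i = 0"
    proof (rule ccontr)
      assume "\<not> (\<forall>i<k. c i = 0)"
      then have "n - k + 1 \<le> card {j. j < n \<and> (\<Sum>i<k. c i * G i j) \<noteq> 0}" using W by blast
      moreover have "{j. j < n \<and> (\<Sum>i<k. c i * G i j) \<noteq> 0} = {}" using h by auto
      ultimately show False by simp
    qed
  qed
  define C where "C = row_space n k G"
  define cw where "cw = (\<lambda>c j. if j < n then (\<Sum>i<k. c i * G i j) else (0::'a))"
  have C_eq: "C = {cw c | c. True}" unfolding C_def row_space_def cw_def by simp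
  define DS where "DS = {hamming_dist n u v | u v. u \<in> C \<and> v \<in> C \<and> u \<noteq> v}"
  have low: "n - k + 1 \<le> x" if xD: "x \<in> DS" for x
  proof -
    obtain u v where uv: "x = hamming_dist n u v" "u \<in> C" "v \<in> C" "u \<noteq> v"
      using xD unfolding DS_def by blast
    obtain c c' where u: "u = cw c" and v: "v = cw c'" using uv C_eq by blast
    have "\<exists>i<k. c i - c' i \<noteq> 0"
    proof (rule ccontr)
      assume "\<not> (\<exists>i<k. c i - c' i \<noteq> 0)"
      then have "\<forall>i<k. c i = c' i" by auto
      then have "cw c = cw c'" unfolding cw_def by (intro ext) auto
      then show False using uv u v by simp
    qed
    then have "n - k + 1 \<le> card {j. j < n \<and> (\<Sum>i<k. (c i - c' i) * G i j) \<noteq> 0}" by (rule W)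
    also have "{j. j < n \<and> (\<Sum>i<k. (c i - c' i) * G i j) \<noteq> 0} = {j. j < n \<and> u j \<noteq> v j}"
      unfolding u v cw_def by (auto simp: left_diff_distrib sum_subtractf)
    finally show ?thesis using uv(1) unfolding hamming_dist_def by simp
  qed
  define e0 where "e0 = (\<lambda>i::nat. if i = 0 then (1::'a) else 0)"
  have k0: "0 < k" using k1 by simp
  have sd: "(\<Sum>i<k. e0 i * G i j) = G 0 j" for j
  proof -
    have "(\<Sum>i<k. e0 i * G i j) = (\<Sum>i<k. if i = 0 then G i j else 0)"
      unfolding e0_def by (intro sum.cong) auto
    also have "\<dots> = G 0 j" using k0 by (simp add: sum.delta)
    finally show ?thesis .
  qed
  have cwe: "cw e0 j = (if j < n then G 0 j else 0)" for j
    unfolding cw_def using sd by simp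
  have cw0: "cw (\<lambda>_. 0) = (\<lambda>_. 0)" unfolding cw_def by auto
  have "n - k + 1 \<le> card {j. j < n \<and> (\<Sum>i<k. e0 i * G i j) \<noteq> 0}"
    by (rule W) (use k0 in \<open>auto simp: e0_def\<close>)
  also have "{j. j < n \<and> (\<Sum>i<k. e0 i * G i j) \<noteq> 0} = {j. j < n \<and> G 0 j \<noteq> 0}"
    using sd by simp
  finally have ge: "n - k + 1 \<le> card {j. j < n \<and> G 0 j \<noteq> 0}" .
  have "{j. j < n \<and> G 0 j \<noteq> 0} \<subseteq> supp n M 0"
    using fits k0 unfolding fits_def supp_def by auto
  then have "card {j. j < n \<and> G 0 j \<noteq> 0} \<le> card (supp n M 0)"
    by (intro card_mono) (auto simp: supp_def)
  then have eqc: "card {j. j < n \<and> G 0 j \<noteq> 0} = n - k + 1" using ge wt k0 by force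
  have hd: "hamming_dist n (cw e0) (cw (\<lambda>_. 0)) = n - k + 1"
  proof -
    have "{j. j < n \<and> cw e0 j \<noteq> (\<lambda>_. 0) j} = {j. j < n \<and> G 0 j \<noteq> 0}"
      using cwe by auto
    then show ?thesis unfolding hamming_dist_def cw0 using eqc by simp
  qed
  have ne: "cw e0 \<noteq> cw (\<lambda>_. 0)"
  proof
    assume "cw e0 = cw (\<lambda>_. 0)"
    then have "hamming_dist n (cw e0) (cw (\<lambda>_. 0)) = 0" unfolding hamming_dist_def by simp
    then show False using hd by simp
  qed
  have "cw e0 \<in> C" "cw (\<lambda>_. 0) \<in> C" using C_eq by blast+
  then have mem: "n - k + 1 \<in> DS"
    unfolding DS_def using hd ne by (metis (mono_tags, lifting) mem_Collect_eq)
  have fin: "finite DS"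
  proof (rule finite_subset)
    show "DS \<subseteq> {..n}"
    proof
      fix x assume "x \<in> DS"
      then obtain u v :: "nat \<Rightarrow> 'a" where "x = hamming_dist n u v" unfolding DS_def by blast
      moreover have "card {j. j < n \<and> u j \<noteq> v j} \<le> card {..<n}" by (intro card_mono) auto
      ultimately show "x \<in> {..n}" unfolding hamming_dist_def by simp
    qed
  qed simp
  have "min_distance n C = n - k + 1"
    unfolding min_distance_def DS_def[symmetric]
    by (rule Min_eqI[OF fin]) (use low mem in auto)
  moreover have "is_generator_matrix n k G C" unfolding is_generator_matrix_def C_def using indep by simp
  ultimately have "is_MDS_code n k C" unfolding is_MDS_code_def is_linear_code_def by blast
  then show ?thesis using fits \<open>is_generator_matrix n k G C\<close> by blast
qed

end

theorem mainTheorem7: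
  fixes n k :: nat and M :: "nat \<Rightarrow> nat \<Rightarrow> bool"
  assumes "1 \<le> k" and "k \<le> n"
    and "MDS_condition n k M"
    and "\<forall>i<k. card (supp n M i) = n - k + 1"
    and "\<forall>i<k. \<forall>i'<k. i \<noteq> i' \<longrightarrow> card (zero_set n M i \<inter> zero_set n M i') \<le> 1"
    and "card (UNIV :: 'a set) \<ge> n + k - 1"
  shows "\<exists>(G :: nat \<Rightarrow> nat \<Rightarrow> 'a::{finite,field}) C. fits n k G M \<and> is_generator_matrix n k G C \<and> is_MDS_code n k C"
proof -
  interpret cfg n k M using assms(1-5) by unfold_locales
  show ?thesis using main_exists assms(6) by blast
qed

end
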